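(* Consider Markovian SIR dynamics on a tree network $D$ with independent initial node states. Then for all $i,j\in V$ and all $t\ge0$ the following hold exactly: $$\frac{d}{dt}\langle S_i\rangle=-\sum_{j=1}^N T_{ij}\langle S_iI_j\rangle,\qquad \frac{d}{dt}\langle I_i\rangle=\sum_{j=1}^N T_{ij}\langle S_iI_j\rangle-\gamma_i\langle I_i\rangle,$$ $$\frac{d}{dt}\langle S_iI_j\rangle=\sum_{k\neq i}T_{jk}\frac{\langle S_iS_j\rangle\langle S_jI_k\rangle}{\langle S_j\rangle}-\sum_{k\neq j}T_{ik}\frac{\langle S_iI_k\rangle\langle S_iI_j\rangle}{\langle S_i\rangle}-T_{ij}\langle S_iI_j\rangle-\gamma_j\langle S_iI_j\rangle,$$ $$\frac{d}{dt}\langle S_iS_j\rangle=-\sum_{k\neq j}T_{ik}\frac{\langle S_iS_j\rangle\langle S_iI_k\rangle}{\langle S_i\rangle}-\sum_{k\neq i}T_{jk}\frac{\langle S_iS_j\rangle\langle S_jI_k\rangle}{\langle S_j\rangle},$$ where a fraction whose denominator vanishes is interpreted as $0$.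
   Context: $D=(V,A)$ is a directed graph on $V=\{1,\dots,N\}$, with rates $T_{ij}\ge0$, $T_{ij}>0$ iff $(j,i)\in A$, $T_{ii}=0$, and removal rates $\gamma_i>0$. Markovian SIR dynamics: continuous-time Markov chain on $\{S,I,R\}^V$; while $j$ is infectious it makes infectious contacts to $i$ by a Poisson process of rate $T_{ij}$; a susceptible node receiving an infectious contact immediately becomes infectious; infectious node $i$ becomes removed at rate $\gamma_i$; $R$ is absorbing. The node states at time $0$ are mutually independent. $S_i,I_i$ are indicators that node $i$ is susceptible/infectious at time $t$, $\langle\cdot\rangle$ is expectation, and products denote joint indicators. $D$ is a tree network if its underlying undirected graph (obtained by replacing every arc by an undirected edge) is a tree or a forest. *)

theory Defs
  imports "HOL-Analysis.Analysis"
begin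

datatype sir = Sus | Inf | Rem

lemma UNIV_sir: "(UNIV :: sir set) = {Sus, Inf, Rem}"
  using sir.exhaust by auto

instance sir :: finite
  by standard (simp add: UNIV_sir)

text \<open>Nodes are the elements of a finite type 'n (V = UNIV, N = CARD('n)).
  Rates: T i j is the rate of infectious contacts from j to i
  (T i j > 0 iff (j,i) is an arc).\<close>

definition und_adj :: "('n \<Rightarrow> 'n \<Rightarrow> real) \<Rightarrow> 'n \<Rightarrow> 'n \<Rightarrow> bool" where
  "und_adj T i j \<longleftrightarrow> i \<noteq> j \<and> (T i j > 0 \<or> T j i > 0)"

text \<open>D is a tree network: its underlying undirected graph is a tree or a
  forest, i.e. it contains no cycle (a closed walk through at least 3 distinct
  vertices).\<close>
definition tree_network :: "('n \<Rightarrow> 'n \<Rightarrow> real) \<Rightarrow> bool" where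
  "tree_network T \<longleftrightarrow>
     \<not> (\<exists>cs. length cs \<ge> 3 \<and> distinct cs \<and>
            (\<forall>k < length cs. und_adj T (cs ! k) (cs ! ((k + 1) mod length cs))))"

definition sir_rate :: "('n::finite \<Rightarrow> 'n \<Rightarrow> real) \<Rightarrow> ('n \<Rightarrow> real) \<Rightarrow> ('n \<Rightarrow> sir) \<Rightarrow> ('n \<Rightarrow> sir) \<Rightarrow> real" where
  "sir_rate T gam x y =
     (\<Sum>i\<in>UNIV.
        (if x i = Sus \<and> y = x(i := Inf) then (\<Sum>j\<in>UNIV. T i j * (if x j = Inf then 1 else 0)) else 0)
      + (if x i = Inf \<and> y = x(i := Rem) then gam i else 0))"

text \<open>p t is the law (probability mass function) of the chain at time t; it
  is the (unique) solution of the Kolmogorov forward equation.\<close>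
definition kolmogorov_forward ::
  "('n::finite \<Rightarrow> 'n \<Rightarrow> real) \<Rightarrow> ('n \<Rightarrow> real) \<Rightarrow> (real \<Rightarrow> ('n \<Rightarrow> sir) \<Rightarrow> real) \<Rightarrow> bool" where
  "kolmogorov_forward T gam p \<longleftrightarrow>
     (\<forall>t\<ge>0. \<forall>y. ((\<lambda>s. p s y) has_real_derivative
        ((\<Sum>x\<in>UNIV. p t x * sir_rate T gam x y) - p t y * (\<Sum>z\<in>UNIV. sir_rate T gam y z)))
        (at t within {0..}))"

definition expt :: "(real \<Rightarrow> ('n::finite \<Rightarrow> sir) \<Rightarrow> real) \<Rightarrow> real \<Rightarrow> (('n \<Rightarrow> sir) \<Rightarrow> bool) \<Rightarrow> real" where
  "expt p t P = (\<Sum>x\<in>UNIV. p t x * (if P x then 1 else 0))"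

definition frac :: "real \<Rightarrow> real \<Rightarrow> real" where
  "frac a b = (if b = 0 then 0 else a / b)"

end

theory Submission
  imports Defs
begin

lemma gronwall0:
  fixes E E' :: "real \<Rightarrow> real"
  assumes d: "\<And>t. t \<ge> 0 \<Longrightarrow> (E has_real_derivative E' t) (at t within {0..})"
    and b: "\<And>t. t \<ge> 0 \<Longrightarrow> E' t \<le> K * E t"
    and nn: "\<And>t. t \<ge> 0 \<Longrightarrow> E t \<ge> 0" and z: "E 0 = 0" and t: "t \<ge> 0"
  shows "E t = 0"
proof -
  define F where "F s = exp (- (K * s)) * E s" for s
  have dF: "(F has_real_derivative exp (- (K * s)) * (E' s - K * E s)) (at s within {0..})" if "s \<ge> 0" for s
    unfolding F_def using d[OF that] by (auto intro!: derivative_eq_intros simp: algebra_simps)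
  have cont: "continuous_on {0..t} F"
    by (rule DERIV_continuous_on[of _ _ "\<lambda>s. exp (- (K * s)) * (E' s - K * E s)"])
       (rule DERIV_subset[OF dF], auto)
  have "F t \<le> F 0"
  proof (rule DERIV_nonpos_imp_decreasing_open[OF t _ cont])
    fix s assume s: "0 < s" "s < t"
    have "(F has_real_derivative exp (- (K * s)) * (E' s - K * E s)) (at s within {0<..})"
      by (rule DERIV_subset[OF dF]) (use s in auto)
    then have "(F has_real_derivative exp (- (K * s)) * (E' s - K * E s)) (at s)"
      using at_within_open[of s "{0<..}"] s by auto
    moreover have "exp (- (K * s)) * (E' s - K * E s) \<le> 0"
      using b[of s] s by (simp add: mult_nonneg_nonpos)
    ultimately show "\<exists>y. (F has_real_derivative y) (at s) \<and> y \<le> 0" by blast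
  qed
  then have "exp (- (K * t)) * E t \<le> 0" by (simp add: F_def z)
  then have "E t \<le> 0" by (simp add: mult_le_0_iff)
  with nn[OF t] show ?thesis by simp
qed

lemma sq_sum_abs_le:
  fixes c :: "'i \<Rightarrow> real"
  assumes "finite I"
  shows "(\<Sum>j\<in>I. \<bar>c j\<bar>)^2 \<le> real (card I) * (\<Sum>j\<in>I. (c j)^2)"
proof -
  have "(\<Sum>j\<in>I. \<bar>c j\<bar>)^2 = (\<Sum>i\<in>I. \<Sum>j\<in>I. \<bar>c i\<bar> * \<bar>c j\<bar>)"
    by (simp add: power2_eq_square sum_product)
  also have "\<dots> \<le> (\<Sum>i\<in>I. \<Sum>j\<in>I. ((c i)^2 + (c j)^2)/2)"
  proof (intro sum_mono)
    fix i j
    have "0 \<le> (\<bar>c i\<bar> - \<bar>c j\<bar>)^2" by simp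
    then show "\<bar>c i\<bar> * \<bar>c j\<bar> \<le> ((c i)^2 + (c j)^2)/2"
      by (simp add: power2_eq_square algebra_simps)
  qed
  also have "\<dots> = real (card I) * (\<Sum>j\<in>I. (c j)^2)"
    by (simp add: sum.distrib add_divide_distrib sum_divide_distrib[symmetric] sum_distrib_left)
  finally show ?thesis .
qed

lemma lin_vanish:
  fixes c d :: "real \<Rightarrow> 'i::finite \<Rightarrow> real"
  assumes d: "\<And>t i. t \<ge> 0 \<Longrightarrow> ((\<lambda>s. c s i) has_real_derivative d t i) (at t within {0..})"
    and b: "\<And>t i. t \<ge> 0 \<Longrightarrow> \<bar>d t i\<bar> \<le> K * (\<Sum>j\<in>UNIV. \<bar>c t j\<bar>)"
    and z: "\<And>i. c 0 i = 0" and t: "t \<ge> 0"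
  shows "c t i = 0"
proof -
  define E where "E s = (\<Sum>j\<in>UNIV. (c s j)^2)" for s
  have dE: "(E has_real_derivative (\<Sum>j\<in>UNIV. 2 * c s j * d s j)) (at s within {0..})" if "s \<ge> 0" for s
    unfolding E_def
    by (rule DERIV_sum) (use d[OF that] in \<open>auto intro!: derivative_eq_intros\<close>)
  have bE: "(\<Sum>j\<in>UNIV. 2 * c s j * d s j) \<le> (2 * \<bar>K\<bar> * real CARD('i)) * E s" if s: "s \<ge> 0" for s
  proof -
    let ?S = "\<Sum>j\<in>UNIV. \<bar>c s j\<bar>"
    have "(\<Sum>j\<in>UNIV. 2 * c s j * d s j) \<le> (\<Sum>j\<in>UNIV. 2 * \<bar>c s j\<bar> * (\<bar>K\<bar> * ?S))"
    proof (intro sum_mono)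
      fix j
      have "\<bar>d s j\<bar> \<le> \<bar>K\<bar> * ?S" using b[OF s, of j]
        by (smt (verit, ccfv_SIG) mult_right_mono sum_nonneg abs_ge_zero)
      then have "2 * c s j * d s j \<le> 2 * \<bar>c s j\<bar> * \<bar>d s j\<bar>"
        by (simp add: abs_mult[symmetric])
      also have "\<dots> \<le> 2 * \<bar>c s j\<bar> * (\<bar>K\<bar> * ?S)"
        using \<open>\<bar>d s j\<bar> \<le> \<bar>K\<bar> * ?S\<close> by (simp add: mult_left_mono)
      finally show "2 * c s j * d s j \<le> 2 * \<bar>c s j\<bar> * (\<bar>K\<bar> * ?S)" .
    qed
    also have "\<dots> = 2 * \<bar>K\<bar> * ?S^2"
      by (simp add: sum_distrib_left[symmetric] sum_distrib_right[symmetric] power2_eq_square algebra_simps)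
    also have "\<dots> \<le> 2 * \<bar>K\<bar> * (real CARD('i) * E s)"
      unfolding E_def by (intro mult_left_mono sq_sum_abs_le) auto
    finally show ?thesis by simp
  qed
  have "E t = 0"
    by (rule gronwall0[OF dE bE _ _ t]) (auto simp: E_def z intro: sum_nonneg)
  then have "(c t i)^2 = 0"
    unfolding E_def by (subst (asm) sum_nonneg_eq_0_iff) auto
  then show ?thesis by simp
qed


lemma deriv_minsq: "((\<lambda>s::real. (min 0 s)^2) has_real_derivative 2 * min 0 x) (at x)"
proof (cases "x < 0")
  case True
  have "((\<lambda>s::real. s^2) has_real_derivative 2 * x) (at x)"
    by (auto intro!: derivative_eq_intros)
  moreover have "\<forall>\<^sub>F s in nhds x. (min 0 s)^2 = s^2"
    using eventually_nhds_in_open[of "{..<0}" x] True by (auto elim!: eventually_mono)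
  ultimately show ?thesis using True
    by (subst DERIV_cong_ev[OF refl _ refl]) (auto simp: eventually_mono)
next
  case False
  show ?thesis
  proof (cases "x > 0")
    case True
    have ev: "\<forall>\<^sub>F s in nhds x. (min 0 s)^2 = (\<lambda>_. 0::real) s"
      using eventually_nhds_in_open[of "{0<..}" x] True by (auto elim!: eventually_mono)
    have "((\<lambda>_. 0::real) has_real_derivative 0) (at x)" by simp
    then show ?thesis using True
      by (subst DERIV_cong_ev[OF refl ev refl]) simp
  next
    case False
    with \<open>\<not> x < 0\<close> have x: "x = 0" by simp
    have eq: "((min 0 (0 + h))^2 - (min 0 0)^2) / h = min 0 h" for h :: real
      by (cases "h < 0") (auto simp: power2_eq_square min_def)
    have "((\<lambda>h. min 0 h) \<longlongrightarrow> (min 0 0::real)) (at 0)"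
      by (intro tendsto_intros)
    then have "((\<lambda>h. ((min 0 (0 + h))^2 - (min 0 0)^2) / h) \<longlongrightarrow> (0::real)) (at 0)"
      unfolding eq by simp
    then show ?thesis using x by (simp add: DERIV_def)
  qed
qed

lemma metzler_nonneg:
  fixes q :: "real \<Rightarrow> 'i::finite \<Rightarrow> real"
  assumes d: "\<And>t i. t \<ge> 0 \<Longrightarrow> ((\<lambda>s. q s i) has_real_derivative (\<Sum>j\<in>UNIV. m i j * q t j)) (at t within {0..})"
    and m: "\<And>i j. i \<noteq> j \<Longrightarrow> m i j \<ge> 0"
    and z: "\<And>i. q 0 i \<ge> 0" and t: "t \<ge> 0"
  shows "q t i \<ge> 0"
proof -
  define a where "a s j = min 0 (q s j)" for s j
  define E where "E s = (\<Sum>j\<in>UNIV. (a s j)^2)" for s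
  define K where "K = (\<Sum>i\<in>UNIV. \<Sum>j\<in>UNIV. \<bar>m i j\<bar>)"
  have dE: "(E has_real_derivative (\<Sum>i\<in>UNIV. \<Sum>j\<in>UNIV. 2 * a s i * m i j * q s j)) (at s within {0..})"
    if "s \<ge> 0" for s
    unfolding E_def a_def
  proof (rule DERIV_sum)
    fix i
    have "((\<lambda>s. (min 0 (q s i))^2) has_real_derivative 2 * min 0 (q s i) * (\<Sum>j\<in>UNIV. m i j * q s j))
       (at s within {0..})"
      using DERIV_chain2[OF deriv_minsq d[OF that]] by simp
    then show "((\<lambda>s. (min 0 (q s i))^2) has_real_derivative (\<Sum>j\<in>UNIV. 2 * min 0 (q s i) * m i j * q s j))
       (at s within {0..})"
      by (simp add: sum_distrib_left mult.assoc)
  qed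
  have Kge: "\<bar>m i j\<bar> \<le> K" for i j
  proof -
    have "\<bar>m i j\<bar> \<le> (\<Sum>j\<in>UNIV. \<bar>m i j\<bar>)"
      by (rule member_le_sum) auto
    also have "\<dots> \<le> K" unfolding K_def
      by (rule member_le_sum[of i UNIV "\<lambda>i. \<Sum>j\<in>UNIV. \<bar>m i j\<bar>"]) (auto intro: sum_nonneg)
    finally show ?thesis .
  qed
  have trm: "2 * a s i * m i j * q s j \<le> K * ((a s i)^2 + (a s j)^2)" for s i j
  proof (cases "i = j")
    case True
    have "a s i * q s i = (a s i)^2" by (simp add: a_def min_def power2_eq_square)
    then have "2 * a s i * m i j * q s j = 2 * m i i * (a s i)^2" using True
      by (simp add: algebra_simps)
    also have "\<dots> \<le> 2 * K * (a s i)^2"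
      using Kge[of i i] by (intro mult_right_mono) auto
    finally show ?thesis using True by simp
  next
    case False
    have ai: "a s i \<le> 0" and aj: "a s j \<le> q s j" by (auto simp: a_def)
    have mij: "m i j \<ge> 0" using m[OF False] .
    have "a s i * q s j \<le> a s i * a s j" using ai aj by (simp add: mult_left_mono_neg)
    then have h1: "m i j * (a s i * q s j) \<le> m i j * (a s i * a s j)"
      using mij by (rule mult_left_mono)
    have e1: "2 * a s i * m i j * q s j = 2 * (m i j * (a s i * q s j))" by (simp add: ac_simps)
    have e2: "2 * m i j * (a s i * a s j) = 2 * (m i j * (a s i * a s j))" by (simp add: ac_simps)
    have "2 * a s i * m i j * q s j \<le> 2 * m i j * (a s i * a s j)"
      unfolding e1 e2 using h1 by linarith
    also have "\<dots> \<le> m i j * ((a s i)^2 + (a s j)^2)"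
    proof -
      have "2 * (a s i * a s j) \<le> (a s i)^2 + (a s j)^2"
        using sum_squares_bound[of "a s i" "a s j"] by (simp add: power2_eq_square)
      then have "m i j * (2 * (a s i * a s j)) \<le> m i j * ((a s i)^2 + (a s j)^2)"
        using mij by (rule mult_left_mono)
      then show ?thesis by (simp add: ac_simps)
    qed
    also have "\<dots> \<le> K * ((a s i)^2 + (a s j)^2)"
      using Kge[of i j] mij by (intro mult_right_mono) auto
    finally show ?thesis .
  qed
  have bE: "(\<Sum>i\<in>UNIV. \<Sum>j\<in>UNIV. 2 * a s i * m i j * q s j) \<le> (2 * K * real CARD('i)) * E s" for s
  proof -
    have "(\<Sum>i\<in>UNIV. \<Sum>j\<in>UNIV. 2 * a s i * m i j * q s j)
          \<le> (\<Sum>i\<in>UNIV. \<Sum>j\<in>UNIV. K * ((a s i)^2 + (a s j)^2))"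
      by (intro sum_mono trm)
    also have "\<dots> = (2 * K * real CARD('i)) * E s"
    proof -
      have "\<And>i. (\<Sum>j\<in>UNIV. K * ((a s i)^2 + (a s j)^2)) = real CARD('i) * K * (a s i)^2 + K * E s"
        by (simp add: distrib_left sum.distrib E_def sum_distrib_left)
      then have "(\<Sum>i\<in>UNIV. \<Sum>j\<in>UNIV. K * ((a s i)^2 + (a s j)^2))
           = (\<Sum>i\<in>UNIV. real CARD('i) * K * (a s i)^2 + K * E s)" by simp
      also have "\<dots> = real CARD('i) * K * (\<Sum>i\<in>UNIV. (a s i)^2) + real CARD('i) * (K * E s)"
        by (simp add: sum.distrib sum_distrib_left)
      also have "\<dots> = (2 * K * real CARD('i)) * E s"
        by (simp add: E_def algebra_simps)
      finally show ?thesis .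
    qed
    finally show ?thesis .
  qed
  have "E t = 0"
    by (rule gronwall0[OF dE bE _ _ t]) (auto simp: E_def a_def z min_def intro: sum_nonneg)
  then have "(a t i)^2 = 0"
    unfolding E_def by (subst (asm) sum_nonneg_eq_0_iff) auto
  then show ?thesis by (simp add: a_def min_def split: if_splits)
qed


lemma und_adj_sym: "und_adj T i j \<longleftrightarrow> und_adj T j i"
  by (auto simp: und_adj_def)

definition spath :: "('n \<Rightarrow> 'n \<Rightarrow> real) \<Rightarrow> 'n \<Rightarrow> 'n \<Rightarrow> 'n list \<Rightarrow> bool" where
  "spath T c a xs \<longleftrightarrow> xs \<noteq> [] \<and> hd xs = a \<and> distinct xs \<and> c \<notin> set xs \<and>
     (\<forall>k. Suc k < length xs \<longrightarrow> und_adj T (xs ! k) (xs ! Suc k))"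

lemma spath_extend:
  assumes p: "spath T c a xs" and adj: "und_adj T (last xs) w" and wc: "w \<noteq> c"
  shows "\<exists>ys. spath T c a ys \<and> last ys = w"
proof (cases "w \<in> set xs")
  case True
  then obtain us zs where xs: "xs = us @ w # zs" by (meson split_list)
  have "spath T c a (us @ [w])"
    unfolding spath_def
  proof (intro conjI allI impI)
    show "us @ [w] \<noteq> []" by simp
    show "hd (us @ [w]) = a" using p xs by (cases us) (auto simp: spath_def)
    show "distinct (us @ [w])" using p xs by (auto simp: spath_def)
    show "c \<notin> set (us @ [w])" using p xs by (auto simp: spath_def)
    fix k assume k: "Suc k < length (us @ [w])"
    have "und_adj T (xs ! k) (xs ! Suc k)" using p k xs by (auto simp: spath_def)
    moreover have "xs ! k = (us @ [w]) ! k" "xs ! Suc k = (us @ [w]) ! Suc k"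
      using k xs by (auto simp: nth_append)
    ultimately show "und_adj T ((us @ [w]) ! k) ((us @ [w]) ! Suc k)" by simp
  qed
  then show ?thesis by (intro exI[of _ "us @ [w]"]) simp
next
  case False
  have "spath T c a (xs @ [w])"
    unfolding spath_def
  proof (intro conjI allI impI)
    show "xs @ [w] \<noteq> []" by simp
    show "hd (xs @ [w]) = a" using p by (auto simp: spath_def)
    show "distinct (xs @ [w])" using p False by (auto simp: spath_def)
    show "c \<notin> set (xs @ [w])" using p wc by (auto simp: spath_def)
    fix k assume k: "Suc k < length (xs @ [w])"
    show "und_adj T ((xs @ [w]) ! k) ((xs @ [w]) ! Suc k)"
    proof (cases "Suc k < length xs")
      case True
      then show ?thesis using p by (auto simp: spath_def nth_append)
    next
      case False
      then have "k = length xs - 1" "xs \<noteq> []" using k p by (auto simp: spath_def)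
      then show ?thesis using adj by (auto simp: nth_append last_conv_nth)
    qed
  qed
  then show ?thesis by (intro exI[of _ "xs @ [w]"]) simp
qed

lemma spath_no_cycle:
  assumes tree: "tree_network T" and p: "spath T c a xs" and lb: "last xs = b"
    and ca: "und_adj T c a" and cb: "und_adj T c b" and ab: "a \<noteq> b"
  shows False
proof -
  let ?cs = "c # xs"
  have ne: "xs \<noteq> []" and hd: "hd xs = a" and dist: "distinct xs" and cn: "c \<notin> set xs"
    and adj: "\<And>k. Suc k < length xs \<Longrightarrow> und_adj T (xs ! k) (xs ! Suc k)"
    using p by (auto simp: spath_def)
  have len: "length xs \<ge> 2"
  proof (rule ccontr)
    assume "\<not> ?thesis"
    with ne have "length xs = 1" by (cases xs) (auto simp: not_le)
    then obtain y where "xs = [y]" by (cases xs) auto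
    with hd lb ab show False by simp
  qed
  have "length ?cs \<ge> 3 \<and> distinct ?cs \<and>
      (\<forall>k < length ?cs. und_adj T (?cs ! k) (?cs ! ((k + 1) mod length ?cs)))"
  proof (intro conjI allI impI)
    show "length ?cs \<ge> 3" using len by simp
    show "distinct ?cs" using dist cn by simp
    fix k assume k: "k < length ?cs"
    show "und_adj T (?cs ! k) (?cs ! ((k + 1) mod length ?cs))"
    proof (cases "k = length xs")
      case True
      then have "(k + 1) mod length ?cs = 0" by simp
      moreover have "?cs ! k = b" using True lb ne by (simp add: last_conv_nth)
      ultimately show ?thesis using cb by (simp add: und_adj_sym)
    next
      case False
      then have k2: "k < length xs" using k by simp
      then have md: "(k + 1) mod length ?cs = Suc k" by simp
      show ?thesis
      proof (cases k)
        case 0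
        then show ?thesis using md ca hd ne by (simp add: hd_conv_nth)
      next
        case (Suc k')
        then show ?thesis using md adj[of k'] k2 by simp
      qed
    qed
  qed
  with tree show False unfolding tree_network_def by blast
qed

lemma tree_split:
  assumes T_nonneg: "\<forall>i j. T i j \<ge> 0" and tree: "tree_network T"
    and ca: "und_adj T c a" and cb: "und_adj T c b" and ab: "a \<noteq> b"
  shows "\<exists>A. a \<in> A \<and> b \<notin> A \<and> c \<notin> A \<and>
     (\<forall>u v. u \<in> A \<longrightarrow> v \<notin> A \<longrightarrow> v \<noteq> c \<longrightarrow> T u v = 0 \<and> T v u = 0)"
proof -
  define A where "A = {v. \<exists>xs. spath T c a xs \<and> last xs = v}"
  have "a \<noteq> c" using ca by (auto simp: und_adj_def)
  then have "spath T c a [a]" by (simp add: spath_def)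
  then have aA: "a \<in> A" unfolding A_def by force
  have bA: "b \<notin> A" unfolding A_def using spath_no_cycle[OF tree _ _ ca cb ab] by blast
  have cA: "c \<notin> A" unfolding A_def spath_def by (auto simp: last_in_set)
  have cl: "\<not> und_adj T u v" if "u \<in> A" "v \<notin> A" "v \<noteq> c" for u v
  proof
    assume uv: "und_adj T u v"
    from that(1) obtain xs where "spath T c a xs" "last xs = u" unfolding A_def by blast
    then have "v \<in> A" using spath_extend[of T c a xs v] uv that(3) unfolding A_def by auto
    with that(2) show False by simp
  qed
  have "T u v = 0 \<and> T v u = 0" if "u \<in> A" "v \<notin> A" "v \<noteq> c" for u v
  proof -
    have "u \<noteq> v" using that by auto
    with cl[OF that] have "\<not> T u v > 0" "\<not> T v u > 0" by (auto simp: und_adj_def)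
    with T_nonneg show ?thesis by (meson antisym not_le)
  qed
  with aA bA cA show ?thesis by blast
qed


definition Ex :: "(real \<Rightarrow> ('n::finite \<Rightarrow> sir) \<Rightarrow> real) \<Rightarrow> real \<Rightarrow> (('n \<Rightarrow> sir) \<Rightarrow> real) \<Rightarrow> real" where
  "Ex p t h = (\<Sum>x\<in>UNIV. p t x * h x)"

definition lam :: "('n::finite \<Rightarrow> 'n \<Rightarrow> real) \<Rightarrow> ('n \<Rightarrow> sir) \<Rightarrow> 'n \<Rightarrow> real" where
  "lam T x m = (\<Sum>j\<in>UNIV. T m j * (if x j = Inf then 1 else 0))"

definition gen :: "('n::finite \<Rightarrow> 'n \<Rightarrow> real) \<Rightarrow> ('n \<Rightarrow> real) \<Rightarrow> (('n \<Rightarrow> sir) \<Rightarrow> real) \<Rightarrow> ('n \<Rightarrow> sir) \<Rightarrow> real" where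
  "gen T gam h x = (\<Sum>m\<in>UNIV. (if x m = Sus then lam T x m * (h (x(m := Inf)) - h x) else 0)
       + (if x m = Inf then gam m * (h (x(m := Rem)) - h x) else 0))"

lemma rate_sum_term:
  fixes x :: "'n::finite \<Rightarrow> sir" and h :: "('n \<Rightarrow> sir) \<Rightarrow> real"
  shows "(\<Sum>y\<in>UNIV. ((if x m = Sus \<and> y = x(m := Inf) then L else 0)
        + (if x m = Inf \<and> y = x(m := Rem) then g else 0)) * h y)
     = (if x m = Sus then L * h (x(m:=Inf)) else 0) + (if x m = Inf then g * h (x(m:=Rem)) else 0)"
proof (cases "x m")
  case Sus
  then have "(\<Sum>y\<in>UNIV. ((if x m = Sus \<and> y = x(m := Inf) then L else 0)
        + (if x m = Inf \<and> y = x(m := Rem) then g else 0)) * h y)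
     = (\<Sum>y\<in>UNIV. if y = x(m := Inf) then L * h y else 0)"
    by (intro sum.cong refl) simp
  then show ?thesis using Sus by simp
next
  case Inf
  then have "(\<Sum>y\<in>UNIV. ((if x m = Sus \<and> y = x(m := Inf) then L else 0)
        + (if x m = Inf \<and> y = x(m := Rem) then g else 0)) * h y)
     = (\<Sum>y\<in>UNIV. if y = x(m := Rem) then g * h y else 0)"
    by (intro sum.cong refl) simp
  then show ?thesis using Inf by simp
next
  case Rem
  then show ?thesis by simp
qed

lemma rate_sum:
  fixes x :: "'n::finite \<Rightarrow> sir"
  shows "(\<Sum>y\<in>UNIV. sir_rate T gam x y * h y) =
    (\<Sum>m\<in>UNIV. (if x m = Sus then lam T x m * h (x(m:=Inf)) else 0) + (if x m = Inf then gam m * h (x(m:=Rem)) else 0))"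
proof -
  have "(\<Sum>y\<in>UNIV. sir_rate T gam x y * h y) =
     (\<Sum>y\<in>UNIV. \<Sum>m\<in>UNIV. ((if x m = Sus \<and> y = x(m := Inf) then lam T x m else 0)
        + (if x m = Inf \<and> y = x(m := Rem) then gam m else 0)) * h y)"
    unfolding sir_rate_def lam_def by (simp add: sum_distrib_right)
  also have "\<dots> = (\<Sum>m\<in>UNIV. \<Sum>y\<in>UNIV. ((if x m = Sus \<and> y = x(m := Inf) then lam T x m else 0)
        + (if x m = Inf \<and> y = x(m := Rem) then gam m else 0)) * h y)"
    by (rule sum.swap)
  also have "\<dots> = (\<Sum>m\<in>UNIV. (if x m = Sus then lam T x m * h (x(m:=Inf)) else 0) + (if x m = Inf then gam m * h (x(m:=Rem)) else 0))"
    by (simp only: rate_sum_term)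
  finally show ?thesis .
qed

lemma gen_alt:
  fixes x :: "'n::finite \<Rightarrow> sir"
  shows "gen T gam h x = (\<Sum>y\<in>UNIV. sir_rate T gam x y * h y) - h x * (\<Sum>z\<in>UNIV. sir_rate T gam x z)"
proof -
  have o: "(\<Sum>z\<in>UNIV. sir_rate T gam x z) = (\<Sum>m\<in>UNIV. (if x m = Sus then lam T x m else 0) + (if x m = Inf then gam m else 0))"
  proof -
    have "(\<Sum>z\<in>UNIV. sir_rate T gam x z) = (\<Sum>z\<in>UNIV. sir_rate T gam x z * (\<lambda>_. 1::real) z)" by simp
    also have "\<dots> = (\<Sum>m\<in>UNIV. (if x m = Sus then lam T x m * (\<lambda>_. 1::real) (x(m:=Inf)) else 0) + (if x m = Inf then gam m * (\<lambda>_. 1::real) (x(m:=Rem)) else 0))"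
      by (rule rate_sum)
    finally show ?thesis by (simp cong: if_cong)
  qed
  show ?thesis unfolding o rate_sum gen_def sum_distrib_left sum_subtractf[symmetric]
    by (intro sum.cong refl) (auto simp: algebra_simps)
qed

lemma gen_deriv:
  fixes p :: "real \<Rightarrow> ('n::finite \<Rightarrow> sir) \<Rightarrow> real"
  assumes fw: "kolmogorov_forward T gam p" and t: "t \<ge> 0"
  shows "((\<lambda>s. Ex p s h) has_real_derivative Ex p t (gen T gam h)) (at t within {0..})"
proof -
  let ?d = "\<lambda>y. (\<Sum>x\<in>UNIV. p t x * sir_rate T gam x y) - p t y * (\<Sum>z\<in>UNIV. sir_rate T gam y z)"
  have "((\<lambda>s. \<Sum>y\<in>UNIV. p s y * h y) has_real_derivative (\<Sum>y\<in>UNIV. ?d y * h y)) (at t within {0..})"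
    by (rule DERIV_sum, rule DERIV_cmult_right) (use fw t in \<open>auto simp: kolmogorov_forward_def\<close>)
  moreover have "(\<Sum>y\<in>UNIV. ?d y * h y) = Ex p t (gen T gam h)"
  proof -
    have "(\<Sum>y\<in>UNIV. ?d y * h y) = (\<Sum>y\<in>UNIV. \<Sum>x\<in>UNIV. p t x * sir_rate T gam x y * h y)
        - (\<Sum>y\<in>UNIV. p t y * h y * (\<Sum>z\<in>UNIV. sir_rate T gam y z))"
      by (simp add: left_diff_distrib sum_subtractf sum_distrib_right sum_distrib_left algebra_simps)
    also have "(\<Sum>y\<in>UNIV. \<Sum>x\<in>UNIV. p t x * sir_rate T gam x y * h y)
        = (\<Sum>x\<in>UNIV. p t x * (\<Sum>y\<in>UNIV. sir_rate T gam x y * h y))"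
      by (subst sum.swap) (simp add: sum_distrib_left mult.assoc)
    finally show ?thesis unfolding Ex_def gen_alt
      by (simp add: right_diff_distrib sum_subtractf mult.assoc)
  qed
  ultimately show ?thesis unfolding Ex_def by simp
qed


definition dep :: "'n set \<Rightarrow> (('n \<Rightarrow> sir) \<Rightarrow> real) \<Rightarrow> bool" where
  "dep X \<phi> \<longleftrightarrow> (\<forall>x x'. (\<forall>v\<in>X. x v = x' v) \<longrightarrow> \<phi> x = \<phi> x')"

definition lamX :: "('n::finite \<Rightarrow> 'n \<Rightarrow> real) \<Rightarrow> 'n set \<Rightarrow> ('n \<Rightarrow> sir) \<Rightarrow> 'n \<Rightarrow> real" where
  "lamX T X x m = (\<Sum>j\<in>X. T m j * (if x j = Inf then 1 else 0))"

definition GX :: "('n::finite \<Rightarrow> 'n \<Rightarrow> real) \<Rightarrow> ('n \<Rightarrow> real) \<Rightarrow> 'n \<Rightarrow> 'n set \<Rightarrow> (('n \<Rightarrow> sir) \<Rightarrow> real) \<Rightarrow> ('n \<Rightarrow> sir) \<Rightarrow> real" where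
  "GX T gam c X \<phi> x = (\<Sum>m\<in>X. (if x m = Sus then lamX T X x m * (\<phi> (x(m := Inf)) - \<phi> x) else 0)
       + (if x m = Inf then gam m * (\<phi> (x(m := Rem)) - \<phi> x) else 0))
     - lamX T X x c * \<phi> x"

definition Sc :: "'n \<Rightarrow> ('n \<Rightarrow> sir) \<Rightarrow> real" where
  "Sc c x = (if x c = Sus then 1 else 0)"

definition fI :: "'n set \<Rightarrow> ('n \<Rightarrow> sir) \<Rightarrow> ('n \<Rightarrow> sir) \<Rightarrow> real" where
  "fI X y x = (if \<forall>v\<in>X. x v = y v then 1 else 0)"

definition canon :: "'n set \<Rightarrow> ('n \<Rightarrow> sir) \<Rightarrow> ('n \<Rightarrow> sir)" where
  "canon X x = (\<lambda>v. if v \<in> X then x v else Sus)"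

lemma split_univ_sum:
  fixes f :: "'n::finite \<Rightarrow> 'b::comm_monoid_add"
  assumes "c \<notin> A"
  shows "(\<Sum>v\<in>UNIV. f v) = f c + (\<Sum>v\<in>A. f v) + (\<Sum>v\<in>- insert c A. f v)"
proof -
  have u: "UNIV = insert c (A \<union> - insert c A)" by auto
  have "(\<Sum>v\<in>UNIV. f v) = (\<Sum>v\<in>insert c (A \<union> - insert c A). f v)" using u by simp
  also have "\<dots> = f c + (\<Sum>v\<in>A \<union> - insert c A. f v)"
    using assms by (subst sum.insert) auto
  also have "(\<Sum>v\<in>A \<union> - insert c A. f v) = (\<Sum>v\<in>A. f v) + (\<Sum>v\<in>- insert c A. f v)"
    by (rule sum.union_disjoint) auto
  finally show ?thesis by (simp add: add.assoc)
qed

lemma split_univ_prod: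
  fixes f :: "'n::finite \<Rightarrow> 'b::comm_monoid_mult"
  assumes "c \<notin> A"
  shows "(\<Prod>v\<in>UNIV. f v) = f c * (\<Prod>v\<in>A. f v) * (\<Prod>v\<in>- insert c A. f v)"
proof -
  have u: "UNIV = insert c (A \<union> - insert c A)" by auto
  have "(\<Prod>v\<in>UNIV. f v) = (\<Prod>v\<in>insert c (A \<union> - insert c A). f v)" using u by simp
  also have "\<dots> = f c * (\<Prod>v\<in>A \<union> - insert c A. f v)"
    using assms by (subst prod.insert) auto
  also have "(\<Prod>v\<in>A \<union> - insert c A. f v) = (\<Prod>v\<in>A. f v) * (\<Prod>v\<in>- insert c A. f v)"
    by (rule prod.union_disjoint) auto
  finally show ?thesis by (simp add: mult.assoc)
qed

lemma dep_fI: "dep X (fI X y)"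
  unfolding dep_def fI_def by auto

lemma dep_GX:
  fixes T :: "'n::finite \<Rightarrow> 'n \<Rightarrow> real"
  assumes "dep X \<phi>"
  shows "dep X (GX T gam c X \<phi>)"
  unfolding dep_def
proof (intro allI impI)
  fix x x' :: "'n \<Rightarrow> sir" assume ag: "\<forall>v\<in>X. x v = x' v"
  have lx: "lamX T X x m = lamX T X x' m" for m
    unfolding lamX_def using ag by (intro sum.cong) auto
  have px: "\<phi> x = \<phi> x'" using assms ag unfolding dep_def by blast
  have pu: "\<phi> (x(m := s)) = \<phi> (x'(m := s))" for m s
    using assms ag unfolding dep_def by (metis fun_upd_apply)
  show "GX T gam c X \<phi> x = GX T gam c X \<phi> x'"
    unfolding GX_def lx px pu
    by (intro arg_cong2[where f="(-)"] sum.cong refl) (use ag in auto)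
qed

lemma canon_range_iff:
  assumes "y \<in> range (canon X)"
  shows "(\<forall>v\<in>X. x v = y v) \<longleftrightarrow> y = canon X x"
proof -
  from assms obtain w where y: "y = canon X w" by auto
  show ?thesis
  proof
    assume "\<forall>v\<in>X. x v = y v"
    then show "y = canon X x" using y by (auto simp: canon_def fun_eq_iff)
  next
    assume "y = canon X x"
    then show "\<forall>v\<in>X. x v = y v" by (auto simp: canon_def)
  qed
qed

lemma expand:
  fixes \<phi> :: "('n::finite \<Rightarrow> sir) \<Rightarrow> real"
  assumes "dep X \<phi>"
  shows "\<phi> x = (\<Sum>y\<in>range (canon X). \<phi> y * fI X y x)"
proof -
  have "(\<Sum>y\<in>range (canon X). \<phi> y * fI X y x) = (\<Sum>y\<in>range (canon X). if y = canon X x then \<phi> y else 0)"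
    by (intro sum.cong refl) (auto simp: fI_def canon_range_iff)
  also have "\<dots> = \<phi> (canon X x)" by simp
  also have "\<dots> = \<phi> x" using assms unfolding dep_def by (auto simp: canon_def)
  finally show ?thesis by simp
qed

definition MM :: "(real \<Rightarrow> ('n::finite \<Rightarrow> sir) \<Rightarrow> real) \<Rightarrow> 'n \<Rightarrow> real \<Rightarrow> (('n \<Rightarrow> sir) \<Rightarrow> real) \<Rightarrow> (('n \<Rightarrow> sir) \<Rightarrow> real) \<Rightarrow> real" where
  "MM p c t \<phi> \<psi> = Ex p t (\<lambda>x. Sc c x * \<phi> x * \<psi> x)"

lemma MM_lin1:
  "MM p c t (\<lambda>x. \<Sum>y\<in>S. a y * f y x) \<psi> = (\<Sum>y\<in>S. a y * MM p c t (f y) \<psi>)"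
  unfolding MM_def Ex_def
  by (simp add: sum_distrib_left sum_distrib_right sum.swap[of _ S] mult_ac)

lemma MM_lin2:
  "MM p c t \<phi> (\<lambda>x. \<Sum>y\<in>S. a y * f y x) = (\<Sum>y\<in>S. a y * MM p c t \<phi> (f y))"
  unfolding MM_def Ex_def
  by (simp add: sum_distrib_left sum_distrib_right sum.swap[of _ S] mult_ac)


context
  fixes T :: "'n::finite \<Rightarrow> 'n \<Rightarrow> real" and gam :: "'n \<Rightarrow> real" and c :: 'n and A :: "'n set"
  assumes Tcc: "T c c = 0" and cA: "c \<notin> A"
    and noedge: "\<And>u v. u \<in> A \<Longrightarrow> v \<notin> A \<Longrightarrow> v \<noteq> c \<Longrightarrow> T u v = 0 \<and> T v u = 0"
begin

lemma lam_split:
  fixes x :: "'n \<Rightarrow> sir"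
  assumes xc: "x c = Sus"
  shows "lam T x c = lamX T A x c + lamX T (- insert c A) x c"
    and "m \<in> A \<Longrightarrow> lam T x m = lamX T A x m"
    and "m \<notin> A \<Longrightarrow> m \<noteq> c \<Longrightarrow> lam T x m = lamX T (- insert c A) x m"
proof -
  show "lam T x c = lamX T A x c + lamX T (- insert c A) x c"
    unfolding lam_def lamX_def by (subst split_univ_sum[OF cA]) (simp add: Tcc)
next
  assume m: "m \<in> A"
  have "lamX T (- insert c A) x m = 0"
    unfolding lamX_def using noedge[OF m] by (intro sum.neutral) auto
  then show "lam T x m = lamX T A x m"
    unfolding lam_def by (subst split_univ_sum[OF cA]) (simp add: xc lamX_def)
next
  assume m: "m \<notin> A" "m \<noteq> c"
  have "lamX T A x m = 0"
    unfolding lamX_def using noedge m by (intro sum.neutral) auto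
  then show "lam T x m = lamX T (- insert c A) x m"
    unfolding lam_def by (subst split_univ_sum[OF cA]) (simp add: xc lamX_def)
qed

lemma gen_prod:
  fixes \<phi> \<psi> :: "('n \<Rightarrow> sir) \<Rightarrow> real"
  assumes dA: "dep A \<phi>" and dB: "dep (- insert c A) \<psi>"
  shows "gen T gam (\<lambda>x. Sc c x * \<phi> x * \<psi> x) x
       = Sc c x * (GX T gam c A \<phi> x * \<psi> x + \<phi> x * GX T gam c (- insert c A) \<psi> x)"
proof (cases "x c = Sus")
  case False
  have "gen T gam (\<lambda>x. Sc c x * \<phi> x * \<psi> x) x = 0"
    unfolding gen_def by (intro sum.neutral ballI) (use False in \<open>auto simp: Sc_def fun_upd_apply\<close>)
  then show ?thesis using False by (simp add: Sc_def)
next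
  case True
  let ?B = "- insert c A"
  let ?h = "\<lambda>x. Sc c x * \<phi> x * \<psi> x"
  let ?F = "\<lambda>m. (if x m = Sus then lam T x m * (?h (x(m := Inf)) - ?h x) else 0)
       + (if x m = Inf then gam m * (?h (x(m := Rem)) - ?h x) else 0)"
  have psiA: "\<psi> (x(m := s)) = \<psi> x" if "m \<in> A" for m s
    using dB that unfolding dep_def by auto
  have phiB: "\<phi> (x(m := s)) = \<phi> x" if "m \<in> ?B" for m s
    using dA that unfolding dep_def by auto
  have Fc: "?F c = - (lamX T A x c + lamX T ?B x c) * \<phi> x * \<psi> x"
    using True lam_split(1)[where x=x, OF True] by (simp add: Sc_def algebra_simps)
  have FA: "(\<Sum>m\<in>A. ?F m) = \<psi> x * (\<Sum>m\<in>A. (if x m = Sus then lamX T A x m * (\<phi> (x(m := Inf)) - \<phi> x) else 0)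
       + (if x m = Inf then gam m * (\<phi> (x(m := Rem)) - \<phi> x) else 0))"
    unfolding sum_distrib_left
  proof (intro sum.cong refl)
    fix m assume m: "m \<in> A"
    then have mc: "m \<noteq> c" using cA by auto
    show "?F m = \<psi> x * ((if x m = Sus then lamX T A x m * (\<phi> (x(m := Inf)) - \<phi> x) else 0)
       + (if x m = Inf then gam m * (\<phi> (x(m := Rem)) - \<phi> x) else 0))"
      using lam_split(2)[where x=x, OF True m] psiA[OF m] mc True by (simp add: Sc_def algebra_simps)
  qed
  have FB: "(\<Sum>m\<in>?B. ?F m) = \<phi> x * (\<Sum>m\<in>?B. (if x m = Sus then lamX T ?B x m * (\<psi> (x(m := Inf)) - \<psi> x) else 0)
       + (if x m = Inf then gam m * (\<psi> (x(m := Rem)) - \<psi> x) else 0))"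
    unfolding sum_distrib_left
  proof (intro sum.cong refl)
    fix m assume m: "m \<in> ?B"
    then have mc: "m \<noteq> c" "m \<notin> A" by auto
    show "?F m = \<phi> x * ((if x m = Sus then lamX T ?B x m * (\<psi> (x(m := Inf)) - \<psi> x) else 0)
       + (if x m = Inf then gam m * (\<psi> (x(m := Rem)) - \<psi> x) else 0))"
      using lam_split(3)[where x=x, OF True mc(2) mc(1)] phiB[OF m] mc True by (simp add: Sc_def algebra_simps)
  qed
  have "gen T gam ?h x = ?F c + (\<Sum>m\<in>A. ?F m) + (\<Sum>m\<in>?B. ?F m)"
    unfolding gen_def by (rule split_univ_sum[OF cA])
  also have "\<dots> = Sc c x * (GX T gam c A \<phi> x * \<psi> x + \<phi> x * GX T gam c ?B \<psi> x)"
    unfolding Fc FA FB GX_def using True by (simp add: Sc_def algebra_simps)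
  finally show ?thesis .
qed

end

lemma sum_bound_inj:
  fixes a :: "'a::finite \<Rightarrow> real" and g :: "'q::finite \<Rightarrow> real" and f :: "'a \<Rightarrow> 'q"
  assumes inj: "inj f" and b: "\<And>y. \<bar>a y\<bar> \<le> K"
  shows "\<bar>\<Sum>y\<in>S. a y * g (f y)\<bar> \<le> K * (\<Sum>q\<in>UNIV. \<bar>g q\<bar>)"
proof -
  have "\<bar>\<Sum>y\<in>S. a y * g (f y)\<bar> \<le> (\<Sum>y\<in>S. \<bar>a y * g (f y)\<bar>)" by (rule sum_abs)
  also have "\<dots> \<le> (\<Sum>y\<in>S. K * \<bar>g (f y)\<bar>)"
    by (intro sum_mono) (simp add: abs_mult b mult_right_mono)
  also have "\<dots> = K * (\<Sum>q\<in>f ` S. \<bar>g q\<bar>)"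
    by (simp add: sum_distrib_left sum.reindex inj_on_subset[OF inj])
  also have "\<dots> \<le> K * (\<Sum>q\<in>UNIV. \<bar>g q\<bar>)"
  proof -
    have "K \<ge> 0" using b[of undefined] by linarith
    moreover have "(\<Sum>q\<in>f ` S. \<bar>g q\<bar>) \<le> (\<Sum>q\<in>UNIV. \<bar>g q\<bar>)"
      by (intro sum_mono2) auto
    ultimately show ?thesis by (rule mult_left_mono[rotated])
  qed
  finally show ?thesis .
qed

lemma le_double_sum:
  fixes a :: "'a::finite \<Rightarrow> 'b::finite \<Rightarrow> real"
  shows "\<bar>a y z\<bar> \<le> (\<Sum>y\<in>UNIV. \<Sum>z\<in>UNIV. \<bar>a y z\<bar>)"
proof -
  have "\<bar>a y z\<bar> \<le> (\<Sum>z\<in>UNIV. \<bar>a y z\<bar>)" by (rule member_le_sum) auto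
  also have "\<dots> \<le> (\<Sum>y\<in>UNIV. \<Sum>z\<in>UNIV. \<bar>a y z\<bar>)"
    by (rule member_le_sum[of y UNIV "\<lambda>y. \<Sum>z\<in>UNIV. \<bar>a y z\<bar>"]) (auto intro: sum_nonneg)
  finally show ?thesis .
qed

lemma sum_comb:
  fixes f a c :: "'a \<Rightarrow> real"
  shows "(\<Sum>i\<in>S. f i * (a i * b - c i * d)) = (\<Sum>i\<in>S. f i * a i) * b - (\<Sum>i\<in>S. f i * c i) * d"
    and "(\<Sum>i\<in>S. f i * (b * a i - d * c i)) = b * (\<Sum>i\<in>S. f i * a i) - d * (\<Sum>i\<in>S. f i * c i)"
    and "(\<Sum>i\<in>S. f i * (a i * b - d * c i)) = (\<Sum>i\<in>S. f i * a i) * b - d * (\<Sum>i\<in>S. f i * c i)"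
    and "(\<Sum>i\<in>S. f i * (b * a i - c i * d)) = b * (\<Sum>i\<in>S. f i * a i) - (\<Sum>i\<in>S. f i * c i) * d"
  by (simp_all add: sum_distrib_left sum_distrib_right sum_subtractf algebra_simps)

definition "Mq p c A t y z = MM p c t (fI A y) (fI (- insert c A) z)"
definition "aA T gam c A y y2 = GX T gam c A (fI A y) y2"
definition "aB T gam c A z z2 = GX T gam c (- insert c A) (fI (- insert c A) z) z2"
definition "dMq T gam p c A t y z = (\<Sum>y2\<in>range (canon A). aA T gam c A y y2 * Mq p c A t y2 z)
   + (\<Sum>z2\<in>range (canon (- insert c A)). aB T gam c A z z2 * Mq p c A t y z2)"
definition "Cq p c A t q = (case q of (y, z, y', z') \<Rightarrow> Mq p c A t y z * Mq p c A t y' z' - Mq p c A t y z' * Mq p c A t y' z)"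
definition "dCq T gam p c A t q = (case q of (y, z, y', z') \<Rightarrow>
     (\<Sum>y2\<in>range (canon A). aA T gam c A y y2 * Cq p c A t (y2, z, y', z'))
   + (\<Sum>z2\<in>range (canon (- insert c A)). aB T gam c A z z2 * Cq p c A t (y, z2, y', z'))
   + (\<Sum>y2\<in>range (canon A). aA T gam c A y' y2 * Cq p c A t (y, z, y2, z'))
   + (\<Sum>z2\<in>range (canon (- insert c A)). aB T gam c A z' z2 * Cq p c A t (y, z, y', z2)))"

context
  fixes T :: "'n::finite \<Rightarrow> 'n \<Rightarrow> real" and gam :: "'n \<Rightarrow> real" and c :: 'n and A :: "'n set"
    and p :: "real \<Rightarrow> ('n \<Rightarrow> sir) \<Rightarrow> real" and pi0 :: "'n \<Rightarrow> sir \<Rightarrow> real"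
  assumes Tcc: "T c c = 0" and cA: "c \<notin> A"
    and noedge: "\<And>u v. u \<in> A \<Longrightarrow> v \<notin> A \<Longrightarrow> v \<noteq> c \<Longrightarrow> T u v = 0 \<and> T v u = 0"
    and fw: "kolmogorov_forward T gam p"
    and init: "\<And>x. p 0 x = (\<Prod>i\<in>UNIV. pi0 i (x i))"
begin

lemma MM_deriv:
  assumes dA: "dep A \<phi>" and dB: "dep (- insert c A) \<psi>" and t: "t \<ge> 0"
  shows "((\<lambda>s. MM p c s \<phi> \<psi>) has_real_derivative
     MM p c t (GX T gam c A \<phi>) \<psi> + MM p c t \<phi> (GX T gam c (- insert c A) \<psi>)) (at t within {0..})"
proof -
  have "Ex p t (gen T gam (\<lambda>x. Sc c x * \<phi> x * \<psi> x))
      = MM p c t (GX T gam c A \<phi>) \<psi> + MM p c t \<phi> (GX T gam c (- insert c A) \<psi>)"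
  proof -
    have pt: "gen T gam (\<lambda>x. Sc c x * \<phi> x * \<psi> x) x
       = Sc c x * (GX T gam c A \<phi> x * \<psi> x + \<phi> x * GX T gam c (- insert c A) \<psi> x)" for x
      by (rule gen_prod[where T=T and c=c and A=A, OF Tcc cA noedge dA dB])
    show ?thesis unfolding MM_def Ex_def pt
      by (simp add: sum.distrib[symmetric] algebra_simps)
  qed
  then show ?thesis
    unfolding MM_def using gen_deriv[OF fw t] by metis
qed

lemma Mq_deriv:
  assumes t: "t \<ge> 0"
  shows "((\<lambda>s. Mq p c A s y z) has_real_derivative dMq T gam p c A t y z) (at t within {0..})"
proof -
  have e1: "GX T gam c A (fI A y) = (\<lambda>x. \<Sum>y2\<in>range (canon A). aA T gam c A y y2 * fI A y2 x)"
    unfolding aA_def by (rule ext, rule expand, rule dep_GX, rule dep_fI)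
  have e2: "GX T gam c (- insert c A) (fI (- insert c A) z) = (\<lambda>x. \<Sum>z2\<in>range (canon (- insert c A)). aB T gam c A z z2 * fI (- insert c A) z2 x)"
    unfolding aB_def by (rule ext, rule expand, rule dep_GX, rule dep_fI)
  show ?thesis
    using MM_deriv[OF dep_fI dep_fI t, of y z]
    unfolding Mq_def dMq_def e1 e2 MM_lin1 MM_lin2 .
qed

lemma Cq_deriv:
  assumes t: "t \<ge> 0"
  shows "((\<lambda>s. Cq p c A s q) has_real_derivative dCq T gam p c A t q) (at t within {0..})"
proof -
  obtain y z y' z' where q: "q = (y, z, y', z')" by (cases q) auto
  have "((\<lambda>s. Mq p c A s y z * Mq p c A s y' z' - Mq p c A s y z' * Mq p c A s y' z) has_real_derivative
     dMq T gam p c A t y z * Mq p c A t y' z' + dMq T gam p c A t y' z' * Mq p c A t y z - (dMq T gam p c A t y z' * Mq p c A t y' z + dMq T gam p c A t y' z * Mq p c A t y z'))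
     (at t within {0..})"
    by (intro DERIV_diff DERIV_mult Mq_deriv t)
  moreover have "dMq T gam p c A t y z * Mq p c A t y' z' + dMq T gam p c A t y' z' * Mq p c A t y z - (dMq T gam p c A t y z' * Mq p c A t y' z + dMq T gam p c A t y' z * Mq p c A t y z')
     = dCq T gam p c A t q"
    unfolding q dCq_def Cq_def dMq_def prod.case sum_comb
    by (simp add: algebra_simps)
  ultimately show ?thesis unfolding q Cq_def prod.case by simp
qed

lemma Cq_bound:
  "\<bar>dCq T gam p c A t q\<bar> \<le> (2 * ((\<Sum>y\<in>UNIV. \<Sum>z\<in>UNIV. \<bar>aA T gam c A y z\<bar>) + (\<Sum>y\<in>UNIV. \<Sum>z\<in>UNIV. \<bar>aB T gam c A y z\<bar>)))
      * (\<Sum>q\<in>UNIV. \<bar>Cq p c A t q\<bar>)"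
proof -
  obtain y z y' z' where q: "q = (y, z, y', z')" by (cases q) auto
  let ?KA = "\<Sum>y\<in>UNIV. \<Sum>z\<in>UNIV. \<bar>aA T gam c A y z\<bar>" and ?KB = "\<Sum>y\<in>UNIV. \<Sum>z\<in>UNIV. \<bar>aB T gam c A y z\<bar>"
  let ?S = "\<Sum>q\<in>UNIV. \<bar>Cq p c A t q\<bar>"
  have b1: "\<bar>\<Sum>y2\<in>range (canon A). aA T gam c A y y2 * Cq p c A t (y2, z, y', z')\<bar> \<le> ?KA * ?S"
    by (rule sum_bound_inj[where f="\<lambda>y2. (y2, z, y', z')"]) (auto simp: inj_def le_double_sum)
  have b2: "\<bar>\<Sum>z2\<in>range (canon (- insert c A)). aB T gam c A z z2 * Cq p c A t (y, z2, y', z')\<bar> \<le> ?KB * ?S"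
    by (rule sum_bound_inj[where f="\<lambda>z2. (y, z2, y', z')"]) (auto simp: inj_def le_double_sum)
  have b3: "\<bar>\<Sum>y2\<in>range (canon A). aA T gam c A y' y2 * Cq p c A t (y, z, y2, z')\<bar> \<le> ?KA * ?S"
    by (rule sum_bound_inj[where f="\<lambda>y2. (y, z, y2, z')"]) (auto simp: inj_def le_double_sum)
  have b4: "\<bar>\<Sum>z2\<in>range (canon (- insert c A)). aB T gam c A z' z2 * Cq p c A t (y, z, y', z2)\<bar> \<le> ?KB * ?S"
    by (rule sum_bound_inj[where f="\<lambda>z2. (y, z, y', z2)"]) (auto simp: inj_def le_double_sum)
  have "\<bar>dCq T gam p c A t q\<bar> \<le> ?KA * ?S + ?KB * ?S + ?KA * ?S + ?KB * ?S"
    unfolding q dCq_def prod.case using b1 b2 b3 b4 by linarith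
  then show ?thesis by (simp add: algebra_simps)
qed

lemma Mq0:
  "Mq p c A 0 y z = pi0 c Sus * (\<Prod>v\<in>A. pi0 v (y v)) * (\<Prod>v\<in>- insert c A. pi0 v (z v))"
proof -
  define mg where "mg = (\<lambda>v. if v \<in> A then y v else if v = c then Sus else z v)"
  have pt: "Sc c x * fI A y x * fI (- insert c A) z x = (if x = mg then 1 else 0)" for x
  proof -
    have "(x c = Sus \<and> (\<forall>v\<in>A. x v = y v) \<and> (\<forall>v\<in>- insert c A. x v = z v)) \<longleftrightarrow> x = mg"
      unfolding mg_def using cA by (auto simp: fun_eq_iff)
    then show ?thesis by (auto simp: Sc_def fI_def)
  qed
  have "Mq p c A 0 y z = p 0 mg"
    unfolding Mq_def MM_def Ex_def pt by (simp add: if_distrib cong: if_cong)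
  also have "\<dots> = pi0 c (mg c) * (\<Prod>v\<in>A. pi0 v (mg v)) * (\<Prod>v\<in>- insert c A. pi0 v (mg v))"
    unfolding init by (rule split_univ_prod[OF cA])
  also have "\<dots> = pi0 c Sus * (\<Prod>v\<in>A. pi0 v (y v)) * (\<Prod>v\<in>- insert c A. pi0 v (z v))"
    using cA by (auto simp: mg_def intro!: arg_cong2[where f="(*)"] prod.cong)
  finally show ?thesis .
qed

lemma Cq_zero:
  assumes t: "t \<ge> 0"
  shows "Cq p c A t q = 0"
proof (rule lin_vanish[where c="Cq p c A" and d="dCq T gam p c A", OF Cq_deriv Cq_bound _ t])
  fix q :: "('n \<Rightarrow> sir) \<times> ('n \<Rightarrow> sir) \<times> ('n \<Rightarrow> sir) \<times> ('n \<Rightarrow> sir)"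
  show "Cq p c A 0 q = 0"
    by (cases q) (simp add: Cq_def Mq0 mult_ac)
qed

end

context
  fixes T :: "'n::finite \<Rightarrow> 'n \<Rightarrow> real" and gam :: "'n \<Rightarrow> real" and c :: 'n and A :: "'n set"
    and p :: "real \<Rightarrow> ('n \<Rightarrow> sir) \<Rightarrow> real" and pi0 :: "'n \<Rightarrow> sir \<Rightarrow> real"
  assumes Tcc: "T c c = 0" and cA: "c \<notin> A"
    and noedge: "\<And>u v. u \<in> A \<Longrightarrow> v \<notin> A \<Longrightarrow> v \<noteq> c \<Longrightarrow> T u v = 0 \<and> T v u = 0"
    and fw: "kolmogorov_forward T gam p"
    and init: "\<And>x. p 0 x = (\<Prod>i\<in>UNIV. pi0 i (x i))"
begin

lemma MM_expand2:
  assumes dA: "dep A \<phi>" and dB: "dep (- insert c A) \<psi>"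
  shows "MM p c t \<phi> \<psi> = (\<Sum>y\<in>range (canon A). \<Sum>z\<in>range (canon (- insert c A)).
            \<phi> y * \<psi> z * Mq p c A t y z)"
proof -
  have e1: "\<phi> = (\<lambda>x. \<Sum>y\<in>range (canon A). \<phi> y * fI A y x)"
    by (rule ext, rule expand[OF dA])
  have e2: "\<psi> = (\<lambda>x. \<Sum>z\<in>range (canon (- insert c A)). \<psi> z * fI (- insert c A) z x)"
    by (rule ext, rule expand[OF dB])
  have "MM p c t \<phi> \<psi> = (\<Sum>y\<in>range (canon A). \<phi> y * MM p c t (fI A y) \<psi>)"
    by (subst e1) (rule MM_lin1)
  also have "\<dots> = (\<Sum>y\<in>range (canon A). \<phi> y * (\<Sum>z\<in>range (canon (- insert c A)). \<psi> z * Mq p c A t y z))"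
    unfolding Mq_def by (subst e2) (simp only: MM_lin2)
  finally show ?thesis by (simp add: sum_distrib_left mult.assoc)
qed

lemma factor:
  assumes t: "t \<ge> 0" and dA: "dep A \<phi>" and dB: "dep (- insert c A) \<psi>"
  shows "MM p c t \<phi> \<psi> * MM p c t (\<lambda>_. 1) (\<lambda>_. 1) = MM p c t \<phi> (\<lambda>_. 1) * MM p c t (\<lambda>_. 1) \<psi>"
proof -
  let ?CA = "range (canon A)" and ?CB = "range (canon (- insert c A))"
  let ?M = "Mq p c A t"
  have d1: "dep X (\<lambda>_. 1)" for X by (simp add: dep_def)
  have key: "?M y z * ?M y' z' = ?M y z' * ?M y' z" for y z y' z'
    using Cq_zero[OF Tcc cA noedge fw init t, of "(y, z, y', z')"] by (simp add: Cq_def)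
  define G where "G y z y' z' = \<phi> y * \<psi> z * (?M y z' * ?M y' z)" for y z y' z'
  have "MM p c t \<phi> \<psi> * MM p c t (\<lambda>_. 1) (\<lambda>_. 1)
      = (\<Sum>y\<in>?CA. \<Sum>z\<in>?CB. \<Sum>y'\<in>?CA. \<Sum>z'\<in>?CB. \<phi> y * \<psi> z * (?M y z * ?M y' z'))"
    unfolding MM_expand2[OF dA dB] MM_expand2[OF d1 d1]
    by (simp only: sum_distrib_right, simp only: sum_distrib_left, simp add: mult_ac)
  also have "\<dots> = (\<Sum>y\<in>?CA. \<Sum>z\<in>?CB. \<Sum>y'\<in>?CA. \<Sum>z'\<in>?CB. G y z y' z')"
    unfolding G_def key ..
  also have "\<dots> = (\<Sum>y\<in>?CA. \<Sum>y'\<in>?CA. \<Sum>z'\<in>?CB. \<Sum>z\<in>?CB. G y z y' z')"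
  proof (rule sum.cong[OF refl])
    fix y
    have "(\<Sum>z\<in>?CB. \<Sum>y'\<in>?CA. \<Sum>z'\<in>?CB. G y z y' z') = (\<Sum>y'\<in>?CA. \<Sum>z\<in>?CB. \<Sum>z'\<in>?CB. G y z y' z')"
      by (rule sum.swap)
    also have "\<dots> = (\<Sum>y'\<in>?CA. \<Sum>z'\<in>?CB. \<Sum>z\<in>?CB. G y z y' z')"
      by (intro sum.cong refl sum.swap)
    finally show "(\<Sum>z\<in>?CB. \<Sum>y'\<in>?CA. \<Sum>z'\<in>?CB. G y z y' z') = (\<Sum>y'\<in>?CA. \<Sum>z'\<in>?CB. \<Sum>z\<in>?CB. G y z y' z')" .
  qed
  also have "\<dots> = (\<Sum>y\<in>?CA. \<Sum>z'\<in>?CB. \<Sum>y'\<in>?CA. \<Sum>z\<in>?CB. G y z y' z')"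
    by (intro sum.cong refl sum.swap)
  also have "\<dots> = MM p c t \<phi> (\<lambda>_. 1) * MM p c t (\<lambda>_. 1) \<psi>"
    unfolding MM_expand2[OF dA d1] MM_expand2[OF d1 dB] G_def
    by (simp only: sum_distrib_right, simp only: sum_distrib_left, simp add: mult_ac)
  finally show ?thesis .
qed

end


lemma Ex_add: "Ex p t (\<lambda>x. f x + g x) = Ex p t f + Ex p t g"
  by (simp add: Ex_def sum.distrib algebra_simps)
lemma Ex_diff: "Ex p t (\<lambda>x. f x - g x) = Ex p t f - Ex p t g"
  by (simp add: Ex_def sum_subtractf algebra_simps)
lemma Ex_minus: "Ex p t (\<lambda>x. - f x) = - Ex p t f"
  by (simp add: Ex_def sum_negf)
lemma Ex_cmult: "Ex p t (\<lambda>x. a * f x) = a * Ex p t f"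
  by (simp add: Ex_def sum_distrib_left mult_ac)
lemma Ex_sum: "Ex p t (\<lambda>x. \<Sum>k\<in>S. f k x) = (\<Sum>k\<in>S. Ex p t (f k))"
  by (simp add: Ex_def sum_distrib_left sum.swap[of _ S])
lemma Ex_ind: "Ex p t (\<lambda>x. if P x then 1 else 0) = expt p t P"
  by (simp add: Ex_def expt_def)

lemma expt_deriv:
  assumes fw: "kolmogorov_forward T gam p" and t: "t \<ge> 0"
  shows "((\<lambda>s. expt p s P) has_real_derivative Ex p t (gen T gam (\<lambda>x. if P x then 1 else 0))) (at t within {0..})"
proof -
  have "(\<lambda>s. expt p s P) = (\<lambda>s. Ex p s (\<lambda>x. if P x then 1 else 0))"
    by (simp add: expt_def Ex_def)
  then show ?thesis using gen_deriv[OF fw t] by simp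
qed

lemma sum_one:
  fixes F :: "'n::finite \<Rightarrow> real"
  assumes "\<And>m. m \<noteq> i \<Longrightarrow> F m = 0"
  shows "(\<Sum>m\<in>UNIV. F m) = F i"
proof -
  have "(\<Sum>m\<in>UNIV. F m) = F i + (\<Sum>m\<in>UNIV - {i}. F m)"
    by (subst sum.remove[of _ i]) auto
  also have "(\<Sum>m\<in>UNIV - {i}. F m) = 0" using assms by (intro sum.neutral) auto
  finally show ?thesis by simp
qed

lemma sum_two:
  fixes F :: "'n::finite \<Rightarrow> real"
  assumes "i \<noteq> j" "\<And>m. m \<noteq> i \<Longrightarrow> m \<noteq> j \<Longrightarrow> F m = 0"
  shows "(\<Sum>m\<in>UNIV. F m) = F i + F j"
proof -
  have "(\<Sum>m\<in>UNIV. F m) = F i + (\<Sum>m\<in>UNIV - {i}. F m)"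
    by (subst sum.remove[of _ i]) auto
  also have "(\<Sum>m\<in>UNIV - {i}. F m) = F j + (\<Sum>m\<in>UNIV - {i} - {j}. F m)"
    using assms(1) by (subst sum.remove[of _ j]) auto
  also have "(\<Sum>m\<in>UNIV - {i} - {j}. F m) = 0" using assms(2) by (intro sum.neutral) auto
  finally show ?thesis by simp
qed

lemma lam_if:
  assumes "\<And>k. Q k = (P \<and> x k = Inf)"
  shows "(if P then lam T x i else 0) = (\<Sum>k\<in>UNIV. T i k * (if Q k then 1 else 0))"
  unfolding lam_def assms by (cases P) auto

lemma gen_Si:
  "gen T gam (\<lambda>x. if x i = Sus then 1 else 0) x
     = - (\<Sum>k\<in>UNIV. T i k * (if x i = Sus \<and> x k = Inf then 1 else 0))"
proof -
  have "gen T gam (\<lambda>x. if x i = Sus then 1 else 0) x = - (if x i = Sus then lam T x i else 0)"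
    unfolding gen_def by (subst sum_one[where i=i]) (auto simp: fun_upd_apply)
  also have "\<dots> = - (\<Sum>k\<in>UNIV. T i k * (if x i = Sus \<and> x k = Inf then 1 else 0))"
    by (subst lam_if[where Q="\<lambda>k. x i = Sus \<and> x k = Inf"]) auto
  finally show ?thesis .
qed

lemma gen_Ii:
  "gen T gam (\<lambda>x. if x i = Inf then 1 else 0) x
     = (\<Sum>k\<in>UNIV. T i k * (if x i = Sus \<and> x k = Inf then 1 else 0)) - gam i * (if x i = Inf then 1 else 0)"
proof -
  have "gen T gam (\<lambda>x. if x i = Inf then 1 else 0) x = (if x i = Sus then lam T x i else 0) - gam i * (if x i = Inf then 1 else 0)"
    unfolding gen_def by (subst sum_one[where i=i]) (auto simp: fun_upd_apply)
  also have "(if x i = Sus then lam T x i else 0) = (\<Sum>k\<in>UNIV. T i k * (if x i = Sus \<and> x k = Inf then 1 else 0))"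
    by (subst lam_if[where Q="\<lambda>k. x i = Sus \<and> x k = Inf"]) auto
  finally show ?thesis .
qed

lemma gen_SiIj:
  assumes ij: "i \<noteq> j"
  shows "gen T gam (\<lambda>x. if x i = Sus \<and> x j = Inf then 1 else 0) x
     = - (\<Sum>k\<in>UNIV. T i k * (if x i = Sus \<and> x k = Inf \<and> x j = Inf then 1 else 0))
       + (\<Sum>k\<in>UNIV. T j k * (if x j = Sus \<and> x i = Sus \<and> x k = Inf then 1 else 0))
       - gam j * (if x i = Sus \<and> x j = Inf then 1 else 0)"
proof -
  have "gen T gam (\<lambda>x. if x i = Sus \<and> x j = Inf then 1 else 0) x
     = - (if x i = Sus \<and> x j = Inf then lam T x i else 0) + (if x j = Sus \<and> x i = Sus then lam T x j else 0)
       - gam j * (if x i = Sus \<and> x j = Inf then 1 else 0)"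
    unfolding gen_def using ij by (subst sum_two[where i=i and j=j]) (auto simp: fun_upd_apply)
  also have "(if x i = Sus \<and> x j = Inf then lam T x i else 0)
      = (\<Sum>k\<in>UNIV. T i k * (if x i = Sus \<and> x k = Inf \<and> x j = Inf then 1 else 0))"
    by (subst lam_if[where Q="\<lambda>k. x i = Sus \<and> x k = Inf \<and> x j = Inf"]) auto
  also have "(if x j = Sus \<and> x i = Sus then lam T x j else 0)
      = (\<Sum>k\<in>UNIV. T j k * (if x j = Sus \<and> x i = Sus \<and> x k = Inf then 1 else 0))"
    by (subst lam_if[where Q="\<lambda>k. x j = Sus \<and> x i = Sus \<and> x k = Inf"]) auto
  finally show ?thesis .
qed

lemma gen_SiSj:
  assumes ij: "i \<noteq> j"
  shows "gen T gam (\<lambda>x. if x i = Sus \<and> x j = Sus then 1 else 0) x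
     = - (\<Sum>k\<in>UNIV. T i k * (if x i = Sus \<and> x j = Sus \<and> x k = Inf then 1 else 0))
       - (\<Sum>k\<in>UNIV. T j k * (if x j = Sus \<and> x i = Sus \<and> x k = Inf then 1 else 0))"
proof -
  have "gen T gam (\<lambda>x. if x i = Sus \<and> x j = Sus then 1 else 0) x
     = - (if x i = Sus \<and> x j = Sus then lam T x i else 0) - (if x j = Sus \<and> x i = Sus then lam T x j else 0)"
    unfolding gen_def using ij by (subst sum_two[where i=i and j=j]) (auto simp: fun_upd_apply)
  also have "(if x i = Sus \<and> x j = Sus then lam T x i else 0)
      = (\<Sum>k\<in>UNIV. T i k * (if x i = Sus \<and> x j = Sus \<and> x k = Inf then 1 else 0))"
    by (subst lam_if[where Q="\<lambda>k. x i = Sus \<and> x j = Sus \<and> x k = Inf"]) auto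
  also have "(if x j = Sus \<and> x i = Sus then lam T x j else 0)
      = (\<Sum>k\<in>UNIV. T j k * (if x j = Sus \<and> x i = Sus \<and> x k = Inf then 1 else 0))"
    by (subst lam_if[where Q="\<lambda>k. x j = Sus \<and> x i = Sus \<and> x k = Inf"]) auto
  finally show ?thesis .
qed


lemma rate_nonneg:
  assumes Tn: "\<forall>i j. T i j \<ge> 0" and gp: "\<forall>i. gam i > 0"
  shows "sir_rate T gam x y \<ge> 0"
proof -
  have h1: "0 \<le> (\<Sum>j\<in>UNIV. T i j * (if x j = Inf then 1 else 0))" for i
    using Tn by (intro sum_nonneg) auto
  have h2: "0 \<le> gam i" for i using gp less_imp_le by blast
  show ?thesis unfolding sir_rate_def
    by (intro sum_nonneg add_nonneg_nonneg) (simp_all add: h1 h2)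
qed

lemma p_nonneg:
  fixes p :: "real \<Rightarrow> ('n::finite \<Rightarrow> sir) \<Rightarrow> real"
  assumes Tn: "\<forall>i j. T i j \<ge> 0" and gp: "\<forall>i. gam i > 0"
    and pin: "\<forall>i s. pi0 i s \<ge> 0"
    and init: "\<forall>x. p 0 x = (\<Prod>i\<in>UNIV. pi0 i (x i))"
    and fw: "kolmogorov_forward T gam p" and t: "t \<ge> 0"
  shows "p t x \<ge> 0"
proof (rule metzler_nonneg[where q=p and m="\<lambda>y x. sir_rate T gam x y - (if x = y then (\<Sum>z\<in>UNIV. sir_rate T gam y z) else 0)", OF _ _ _ t])
  fix s :: real and y assume s: "s \<ge> 0"
  have "(\<Sum>x\<in>UNIV. (sir_rate T gam x y - (if x = y then (\<Sum>z\<in>UNIV. sir_rate T gam y z) else 0)) * p s x)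
      = (\<Sum>x\<in>UNIV. p s x * sir_rate T gam x y) - p s y * (\<Sum>z\<in>UNIV. sir_rate T gam y z)"
  proof -
    have "(\<Sum>x\<in>UNIV. (sir_rate T gam x y - (if x = y then (\<Sum>z\<in>UNIV. sir_rate T gam y z) else 0)) * p s x)
       = (\<Sum>x\<in>UNIV. p s x * sir_rate T gam x y - (if x = y then p s y * (\<Sum>z\<in>UNIV. sir_rate T gam y z) else 0))"
      by (intro sum.cong refl) (auto simp: algebra_simps)
    also have "\<dots> = (\<Sum>x\<in>UNIV. p s x * sir_rate T gam x y) - p s y * (\<Sum>z\<in>UNIV. sir_rate T gam y z)"
      by (simp add: sum_subtractf)
    finally show ?thesis .
  qed
  then show "((\<lambda>s. p s y) has_real_derivative (\<Sum>x\<in>UNIV. (sir_rate T gam x y - (if x = y then (\<Sum>z\<in>UNIV. sir_rate T gam y z) else 0)) * p s x)) (at s within {0..})"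
    using fw s unfolding kolmogorov_forward_def by simp
next
  fix y x :: "'n \<Rightarrow> sir" assume "y \<noteq> x"
  then show "0 \<le> sir_rate T gam x y - (if x = y then (\<Sum>z\<in>UNIV. sir_rate T gam y z) else 0)"
    using rate_nonneg[OF Tn gp] by simp
next
  fix y show "0 \<le> p 0 y" using init pin by (simp add: prod_nonneg)
qed

lemma expt_mono:
  assumes pn: "\<And>x. p t x \<ge> 0" and PQ: "\<And>x. P x \<Longrightarrow> Q x"
  shows "expt p t P \<le> expt p t Q"
  unfolding expt_def using pn PQ by (intro sum_mono) (auto intro: mult_left_mono)

lemma expt_nonneg:
  assumes pn: "\<And>x. p t x \<ge> 0"
  shows "expt p t P \<ge> 0"
  unfolding expt_def using pn by (intro sum_nonneg) auto

lemma sir_closure: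
  fixes T :: "'n::finite \<Rightarrow> 'n \<Rightarrow> real" and p :: "real \<Rightarrow> ('n \<Rightarrow> sir) \<Rightarrow> real"
  assumes Tn: "\<forall>i j. T i j \<ge> 0" and Td: "\<forall>i. T i i = 0" and tree: "tree_network T"
    and init: "\<forall>x. p 0 x = (\<Prod>i\<in>UNIV. pi0 i (x i))"
    and fw: "kolmogorov_forward T gam p" and t: "t \<ge> 0"
    and pn: "\<And>x. p t x \<ge> 0"
    and ca: "und_adj T c a" and cb: "und_adj T c b" and ab: "a \<noteq> b"
  shows "expt p t (\<lambda>x. x c = Sus \<and> x a = sa \<and> x b = sb)
     = frac (expt p t (\<lambda>x. x c = Sus \<and> x a = sa) * expt p t (\<lambda>x. x c = Sus \<and> x b = sb)) (expt p t (\<lambda>x. x c = Sus))"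
proof -
  obtain A where aA: "a \<in> A" and bA: "b \<notin> A" and cA: "c \<notin> A"
    and ne: "\<And>u v. u \<in> A \<Longrightarrow> v \<notin> A \<Longrightarrow> v \<noteq> c \<Longrightarrow> T u v = 0 \<and> T v u = 0"
    using tree_split[OF Tn tree ca cb ab] by blast
  have bc: "b \<noteq> c" using cb by (auto simp: und_adj_def)
  let ?\<phi> = "\<lambda>x. if x a = sa then 1 else 0 :: real"
  let ?\<psi> = "\<lambda>x. if x b = sb then 1 else 0 :: real"
  have dA: "dep A ?\<phi>" using aA by (auto simp: dep_def)
  have dB: "dep (- insert c A) ?\<psi>" using bA bc by (auto simp: dep_def)
  have Tcc: "T c c = 0" using Td by simp
  have init': "\<And>x. p 0 x = (\<Prod>i\<in>UNIV. pi0 i (x i))" using init by simp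
  have F: "MM p c t ?\<phi> ?\<psi> * MM p c t (\<lambda>_. 1) (\<lambda>_. 1) = MM p c t ?\<phi> (\<lambda>_. 1) * MM p c t (\<lambda>_. 1) ?\<psi>"
    by (rule factor[where T=T and c=c and A=A, OF Tcc cA ne fw init' t dA dB])
  have e1: "MM p c t ?\<phi> ?\<psi> = expt p t (\<lambda>x. x c = Sus \<and> x a = sa \<and> x b = sb)"
    unfolding MM_def Ex_def expt_def Sc_def by (intro sum.cong refl) auto
  have e2: "MM p c t (\<lambda>_. 1) (\<lambda>_. 1) = expt p t (\<lambda>x. x c = Sus)"
    unfolding MM_def Ex_def expt_def Sc_def by (intro sum.cong refl) auto
  have e3: "MM p c t ?\<phi> (\<lambda>_. 1) = expt p t (\<lambda>x. x c = Sus \<and> x a = sa)"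
    unfolding MM_def Ex_def expt_def Sc_def by (intro sum.cong refl) auto
  have e4: "MM p c t (\<lambda>_. 1) ?\<psi> = expt p t (\<lambda>x. x c = Sus \<and> x b = sb)"
    unfolding MM_def Ex_def expt_def Sc_def by (intro sum.cong refl) auto
  note F' = F[unfolded e1 e2 e3 e4]
  show ?thesis
  proof (cases "expt p t (\<lambda>x. x c = Sus) = 0")
    case True
    have "expt p t (\<lambda>x. x c = Sus \<and> x a = sa \<and> x b = sb) \<le> expt p t (\<lambda>x. x c = Sus)"
      by (rule expt_mono) (auto simp: pn)
    moreover have "expt p t (\<lambda>x. x c = Sus \<and> x a = sa \<and> x b = sb) \<ge> 0"
      by (rule expt_nonneg) (simp add: pn)
    ultimately show ?thesis using True by (simp add: frac_def)
  next
    case False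
    then show ?thesis using F' by (simp add: frac_def field_simps)
  qed
qed


theorem theorem3:
  fixes T :: "'n::finite \<Rightarrow> 'n \<Rightarrow> real"
    and gam :: "'n \<Rightarrow> real"
    and pi0 :: "'n \<Rightarrow> sir \<Rightarrow> real"
    and p :: "real \<Rightarrow> ('n \<Rightarrow> sir) \<Rightarrow> real"
  assumes T_nonneg: "\<forall>i j. T i j \<ge> 0"
    and T_diag: "\<forall>i. T i i = 0"
    and gam_pos: "\<forall>i. gam i > 0"
    and tree: "tree_network T"
    and pi0_nonneg: "\<forall>i s. pi0 i s \<ge> 0"
    and pi0_sum: "\<forall>i. (\<Sum>s\<in>UNIV. pi0 i s) = 1"
    and init: "\<forall>x. p 0 x = (\<Prod>i\<in>UNIV. pi0 i (x i))"
    and forward: "kolmogorov_forward T gam p"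
  shows "\<forall>t\<ge>0. \<forall>i.
    ((\<lambda>s. expt p s (\<lambda>x. x i = Sus)) has_real_derivative
       - (\<Sum>j\<in>UNIV. T i j * expt p t (\<lambda>x. x i = Sus \<and> x j = Inf))) (at t within {0..})
  \<and> ((\<lambda>s. expt p s (\<lambda>x. x i = Inf)) has_real_derivative
       (\<Sum>j\<in>UNIV. T i j * expt p t (\<lambda>x. x i = Sus \<and> x j = Inf))
       - gam i * expt p t (\<lambda>x. x i = Inf)) (at t within {0..})
  \<and> (\<forall>j. und_adj T i j \<longrightarrow>
      ((\<lambda>s. expt p s (\<lambda>x. x i = Sus \<and> x j = Inf)) has_real_derivative
         (\<Sum>k\<in>UNIV - {i}. T j k * frac (expt p t (\<lambda>x. x i = Sus \<and> x j = Sus) * expt p t (\<lambda>x. x j = Sus \<and> x k = Inf))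
                                         (expt p t (\<lambda>x. x j = Sus)))
       - (\<Sum>k\<in>UNIV - {j}. T i k * frac (expt p t (\<lambda>x. x i = Sus \<and> x k = Inf) * expt p t (\<lambda>x. x i = Sus \<and> x j = Inf))
                                         (expt p t (\<lambda>x. x i = Sus)))
       - T i j * expt p t (\<lambda>x. x i = Sus \<and> x j = Inf)
       - gam j * expt p t (\<lambda>x. x i = Sus \<and> x j = Inf)) (at t within {0..})
    \<and> ((\<lambda>s. expt p s (\<lambda>x. x i = Sus \<and> x j = Sus)) has_real_derivative
         - (\<Sum>k\<in>UNIV - {j}. T i k * frac (expt p t (\<lambda>x. x i = Sus \<and> x j = Sus) * expt p t (\<lambda>x. x i = Sus \<and> x k = Inf))
                                         (expt p t (\<lambda>x. x i = Sus)))
         - (\<Sum>k\<in>UNIV - {i}. T j k * frac (expt p t (\<lambda>x. x i = Sus \<and> x j = Sus) * expt p t (\<lambda>x. x j = Sus \<and> x k = Inf))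
                                         (expt p t (\<lambda>x. x j = Sus)))) (at t within {0..}))"
proof (intro allI impI conjI)
  fix t :: real and i :: 'n
  assume t: "t \<ge> 0"
  have pn: "\<And>x. p t x \<ge> 0"
    by (rule p_nonneg[OF T_nonneg gam_pos pi0_nonneg init forward t])
  have cl: "expt p t (\<lambda>x. x c = Sus \<and> x a = sa \<and> x b = sb)
     = frac (expt p t (\<lambda>x. x c = Sus \<and> x a = sa) * expt p t (\<lambda>x. x c = Sus \<and> x b = sb)) (expt p t (\<lambda>x. x c = Sus))"
    if "und_adj T c a" "und_adj T c b" "a \<noteq> b" for c a b sa sb
    by (rule sir_closure[OF T_nonneg T_diag tree init forward t pn that])
  have adjT: "und_adj T u k" if "T u k \<noteq> 0" for u k
  proof -
    have "u \<noteq> k" using that T_diag by auto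
    moreover have "T u k > 0" using that T_nonneg by (simp add: order_le_neq_trans)
    ultimately show ?thesis by (simp add: und_adj_def)
  qed
  have sumJ: "(\<Sum>k\<in>UNIV. T j k * expt p t (\<lambda>x. x j = Sus \<and> x i = Sus \<and> x k = Inf))
     = (\<Sum>k\<in>UNIV - {i}. T j k * frac (expt p t (\<lambda>x. x i = Sus \<and> x j = Sus) * expt p t (\<lambda>x. x j = Sus \<and> x k = Inf))
                                         (expt p t (\<lambda>x. x j = Sus)))" if ij: "und_adj T i j" for j
  proof -
    have z: "expt p t (\<lambda>x. x j = Sus \<and> x i = Sus \<and> x i = Inf) = 0"
      unfolding expt_def by (intro sum.neutral) auto
    have sw: "expt p t (\<lambda>x. x j = Sus \<and> x i = Sus) = expt p t (\<lambda>x. x i = Sus \<and> x j = Sus)"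
      by (rule arg_cong[where f="expt p t"]) auto
    have "(\<Sum>k\<in>UNIV. T j k * expt p t (\<lambda>x. x j = Sus \<and> x i = Sus \<and> x k = Inf))
        = (\<Sum>k\<in>UNIV - {i}. T j k * expt p t (\<lambda>x. x j = Sus \<and> x i = Sus \<and> x k = Inf))"
      by (subst sum.remove[of _ i]) (auto simp: z)
    also have "\<dots> = (\<Sum>k\<in>UNIV - {i}. T j k * frac (expt p t (\<lambda>x. x i = Sus \<and> x j = Sus) * expt p t (\<lambda>x. x j = Sus \<and> x k = Inf))
                                         (expt p t (\<lambda>x. x j = Sus)))"
    proof (rule sum.cong[OF refl])
      fix k assume k: "k \<in> UNIV - {i}"
      show "T j k * expt p t (\<lambda>x. x j = Sus \<and> x i = Sus \<and> x k = Inf) = T j k * frac (expt p t (\<lambda>x. x i = Sus \<and> x j = Sus) * expt p t (\<lambda>x. x j = Sus \<and> x k = Inf))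
                                         (expt p t (\<lambda>x. x j = Sus))"
      proof (cases "T j k = 0")
        case False
        have "und_adj T j i" using ij by (simp add: und_adj_sym)
        then show ?thesis using cl[OF _ adjT[OF False], of i Sus Inf] k sw by auto
      qed simp
    qed
    finally show ?thesis .
  qed
  show "((\<lambda>s. expt p s (\<lambda>x. x i = Sus)) has_real_derivative
       - (\<Sum>j\<in>UNIV. T i j * expt p t (\<lambda>x. x i = Sus \<and> x j = Inf))) (at t within {0..})"
  proof -
    have "gen T gam (\<lambda>x. if x i = Sus then 1 else 0) = (\<lambda>x. - (\<Sum>k\<in>UNIV. T i k * (if x i = Sus \<and> x k = Inf then 1 else 0)))"
      by (rule ext, rule gen_Si)
    then show ?thesis using expt_deriv[OF forward t, of "\<lambda>x. x i = Sus"]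
      by (simp only: Ex_minus Ex_sum Ex_cmult Ex_ind)
  qed
  show "((\<lambda>s. expt p s (\<lambda>x. x i = Inf)) has_real_derivative
       (\<Sum>j\<in>UNIV. T i j * expt p t (\<lambda>x. x i = Sus \<and> x j = Inf))
       - gam i * expt p t (\<lambda>x. x i = Inf)) (at t within {0..})"
  proof -
    have "gen T gam (\<lambda>x. if x i = Inf then 1 else 0) = (\<lambda>x. (\<Sum>k\<in>UNIV. T i k * (if x i = Sus \<and> x k = Inf then 1 else 0)) - gam i * (if x i = Inf then 1 else 0))"
      by (rule ext, rule gen_Ii)
    then show ?thesis using expt_deriv[OF forward t, of "\<lambda>x. x i = Inf"]
      by (simp only: Ex_diff Ex_sum Ex_cmult Ex_ind)
  qed
  fix j
  assume ij: "und_adj T i j"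
  then have inj: "i \<noteq> j" by (simp add: und_adj_def)
  have sumIc: "(\<Sum>k\<in>UNIV. T i k * expt p t (\<lambda>x. x i = Sus \<and> x k = Inf \<and> x j = Inf))
     = T i j * expt p t (\<lambda>x. x i = Sus \<and> x j = Inf) +
       (\<Sum>k\<in>UNIV - {j}. T i k * frac (expt p t (\<lambda>x. x i = Sus \<and> x k = Inf) * expt p t (\<lambda>x. x i = Sus \<and> x j = Inf))
                                         (expt p t (\<lambda>x. x i = Sus)))"
  proof -
    have z: "expt p t (\<lambda>x. x i = Sus \<and> x j = Inf \<and> x j = Inf) = expt p t (\<lambda>x. x i = Sus \<and> x j = Inf)"
      by (rule arg_cong[where f="expt p t"]) auto
    have "(\<Sum>k\<in>UNIV. T i k * expt p t (\<lambda>x. x i = Sus \<and> x k = Inf \<and> x j = Inf))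
        = T i j * expt p t (\<lambda>x. x i = Sus \<and> x j = Inf) + (\<Sum>k\<in>UNIV - {j}. T i k * expt p t (\<lambda>x. x i = Sus \<and> x k = Inf \<and> x j = Inf))"
      by (subst sum.remove[of _ j]) (auto simp: z)
    also have "(\<Sum>k\<in>UNIV - {j}. T i k * expt p t (\<lambda>x. x i = Sus \<and> x k = Inf \<and> x j = Inf))
       = (\<Sum>k\<in>UNIV - {j}. T i k * frac (expt p t (\<lambda>x. x i = Sus \<and> x k = Inf) * expt p t (\<lambda>x. x i = Sus \<and> x j = Inf))
                                         (expt p t (\<lambda>x. x i = Sus)))"
    proof (rule sum.cong[OF refl])
      fix k assume k: "k \<in> UNIV - {j}"
      show "T i k * expt p t (\<lambda>x. x i = Sus \<and> x k = Inf \<and> x j = Inf) = T i k * frac (expt p t (\<lambda>x. x i = Sus \<and> x k = Inf) * expt p t (\<lambda>x. x i = Sus \<and> x j = Inf))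
                                         (expt p t (\<lambda>x. x i = Sus))"
      proof (cases "T i k = 0")
        case False
        then show ?thesis using cl[OF adjT[OF False] ij, of Inf Inf] k by auto
      qed simp
    qed
    finally show ?thesis .
  qed
  have sumId: "(\<Sum>k\<in>UNIV. T i k * expt p t (\<lambda>x. x i = Sus \<and> x j = Sus \<and> x k = Inf))
     = (\<Sum>k\<in>UNIV - {j}. T i k * frac (expt p t (\<lambda>x. x i = Sus \<and> x j = Sus) * expt p t (\<lambda>x. x i = Sus \<and> x k = Inf))
                                         (expt p t (\<lambda>x. x i = Sus)))"
  proof -
    have z: "expt p t (\<lambda>x. x i = Sus \<and> x j = Sus \<and> x j = Inf) = 0"
      unfolding expt_def by (intro sum.neutral) auto
    have "(\<Sum>k\<in>UNIV. T i k * expt p t (\<lambda>x. x i = Sus \<and> x j = Sus \<and> x k = Inf))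
        = (\<Sum>k\<in>UNIV - {j}. T i k * expt p t (\<lambda>x. x i = Sus \<and> x j = Sus \<and> x k = Inf))"
      by (subst sum.remove[of _ j]) (auto simp: z)
    also have "\<dots> = (\<Sum>k\<in>UNIV - {j}. T i k * frac (expt p t (\<lambda>x. x i = Sus \<and> x j = Sus) * expt p t (\<lambda>x. x i = Sus \<and> x k = Inf))
                                         (expt p t (\<lambda>x. x i = Sus)))"
    proof (rule sum.cong[OF refl])
      fix k assume k: "k \<in> UNIV - {j}"
      show "T i k * expt p t (\<lambda>x. x i = Sus \<and> x j = Sus \<and> x k = Inf) = T i k * frac (expt p t (\<lambda>x. x i = Sus \<and> x j = Sus) * expt p t (\<lambda>x. x i = Sus \<and> x k = Inf))
                                         (expt p t (\<lambda>x. x i = Sus))"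
      proof (cases "T i k = 0")
        case False
        then show ?thesis using cl[OF ij adjT[OF False], of Sus Inf] k by auto
      qed simp
    qed
    finally show ?thesis .
  qed
  show "((\<lambda>s. expt p s (\<lambda>x. x i = Sus \<and> x j = Inf)) has_real_derivative
         (\<Sum>k\<in>UNIV - {i}. T j k * frac (expt p t (\<lambda>x. x i = Sus \<and> x j = Sus) * expt p t (\<lambda>x. x j = Sus \<and> x k = Inf))
                                         (expt p t (\<lambda>x. x j = Sus)))
       - (\<Sum>k\<in>UNIV - {j}. T i k * frac (expt p t (\<lambda>x. x i = Sus \<and> x k = Inf) * expt p t (\<lambda>x. x i = Sus \<and> x j = Inf))
                                         (expt p t (\<lambda>x. x i = Sus)))
       - T i j * expt p t (\<lambda>x. x i = Sus \<and> x j = Inf)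
       - gam j * expt p t (\<lambda>x. x i = Sus \<and> x j = Inf)) (at t within {0..})"
  proof -
    have "gen T gam (\<lambda>x. if x i = Sus \<and> x j = Inf then 1 else 0)
       = (\<lambda>x. - (\<Sum>k\<in>UNIV. T i k * (if x i = Sus \<and> x k = Inf \<and> x j = Inf then 1 else 0))
       + (\<Sum>k\<in>UNIV. T j k * (if x j = Sus \<and> x i = Sus \<and> x k = Inf then 1 else 0))
       - gam j * (if x i = Sus \<and> x j = Inf then 1 else 0))"
      by (rule ext, rule gen_SiIj[OF inj])
    then have "((\<lambda>s. expt p s (\<lambda>x. x i = Sus \<and> x j = Inf)) has_real_derivative
        - (\<Sum>k\<in>UNIV. T i k * expt p t (\<lambda>x. x i = Sus \<and> x k = Inf \<and> x j = Inf))
        + (\<Sum>k\<in>UNIV. T j k * expt p t (\<lambda>x. x j = Sus \<and> x i = Sus \<and> x k = Inf))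
        - gam j * expt p t (\<lambda>x. x i = Sus \<and> x j = Inf)) (at t within {0..})"
      using expt_deriv[OF forward t, of "\<lambda>x. x i = Sus \<and> x j = Inf"]
      by (simp only: Ex_diff Ex_add Ex_minus Ex_sum Ex_cmult Ex_ind)
    then show ?thesis unfolding sumIc sumJ[OF ij] by (simp add: algebra_simps)
  qed
  show "((\<lambda>s. expt p s (\<lambda>x. x i = Sus \<and> x j = Sus)) has_real_derivative
         - (\<Sum>k\<in>UNIV - {j}. T i k * frac (expt p t (\<lambda>x. x i = Sus \<and> x j = Sus) * expt p t (\<lambda>x. x i = Sus \<and> x k = Inf))
                                         (expt p t (\<lambda>x. x i = Sus)))
         - (\<Sum>k\<in>UNIV - {i}. T j k * frac (expt p t (\<lambda>x. x i = Sus \<and> x j = Sus) * expt p t (\<lambda>x. x j = Sus \<and> x k = Inf))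
                                         (expt p t (\<lambda>x. x j = Sus)))) (at t within {0..})"
  proof -
    have "gen T gam (\<lambda>x. if x i = Sus \<and> x j = Sus then 1 else 0)
       = (\<lambda>x. - (\<Sum>k\<in>UNIV. T i k * (if x i = Sus \<and> x j = Sus \<and> x k = Inf then 1 else 0))
       - (\<Sum>k\<in>UNIV. T j k * (if x j = Sus \<and> x i = Sus \<and> x k = Inf then 1 else 0)))"
      by (rule ext, rule gen_SiSj[OF inj])
    then have "((\<lambda>s. expt p s (\<lambda>x. x i = Sus \<and> x j = Sus)) has_real_derivative
        - (\<Sum>k\<in>UNIV. T i k * expt p t (\<lambda>x. x i = Sus \<and> x j = Sus \<and> x k = Inf))
        - (\<Sum>k\<in>UNIV. T j k * expt p t (\<lambda>x. x j = Sus \<and> x i = Sus \<and> x k = Inf))) (at t within {0..})"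
      using expt_deriv[OF forward t, of "\<lambda>x. x i = Sus \<and> x j = Sus"]
      by (simp only: Ex_diff Ex_add Ex_minus Ex_sum Ex_cmult Ex_ind)
    then show ?thesis unfolding sumId sumJ[OF ij] .
  qed
qed


end
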